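(* There is an absolute constant $c>0$ such that the following holds. Let $A$ and $B$ be finite nonempty sets of real numbers, and suppose $A$ has distinct consecutive differences. Then \[ |A+B| \ge c\,|A|\,|B|^{1/2}. \] In particular, if $|A|=|B|$ then $|A+B|\ge c|A|^{3/2}$.
   Context: For finite $A,B\subset\mathbb{R}$, $A+B=\{a+b: a\in A, b\in B\}$. Writing $A=\{a_1<a_2<\dots<a_k\}$, the set $A$ has distinct consecutive differences if for $1\le i,j\le k-1$, $a_{i+1}-a_i=a_{j+1}-a_j$ implies $i=j$. *)

theory Defs
  imports Complex_Main
begin

definition sumset :: "real set \<Rightarrow> real set \<Rightarrow> real set" where
  "sumset A B = {a + b | a b. a \<in> A \<and> b \<in> B}"

definition distinct_consec_diffs :: "real set \<Rightarrow> bool" where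
  "distinct_consec_diffs A \<longleftrightarrow>
     (let a = sorted_list_of_set A in
      \<forall>i j. i + 1 < length a \<and> j + 1 < length a \<and>
            a ! (i + 1) - a ! i = a ! (j + 1) - a ! j \<longrightarrow> i = j)"

end

theory Submission
  imports Defs
begin

lemma arith_final:
  fixes N M K Bc G Bd :: nat
  assumes "G \<le> N * M" "Bd * (M + 1) \<le> Bc * N" "G + Bd = K * Bc"
    "M * K \<le> 2 * N" "2 * N < (M + 1) * K" "K < N" "K \<ge> 1"
  shows "Bc * (K+1)^2 \<le> 24 * N^2"
proof -
  have "K * Bc * (M+1) \<le> N * M * (M+1) + Bc * N"
  proof -
    have "K * Bc * (M+1) = G*(M+1) + Bd*(M+1)" using assms(3) by (metis add_mult_distrib)
    also have "\<dots> \<le> N*M*(M+1) + Bc*N" using assms(1,2) by (intro add_mono mult_le_mono1) auto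
    finally show ?thesis .
  qed
  moreover have "Bc * (2*N+1) \<le> K * Bc * (M+1)"
  proof -
    have "2*N+1 \<le> (M+1)*K" using assms(5) by simp
    hence "Bc * (2*N+1) \<le> Bc * ((M+1)*K)" by (rule mult_le_mono2)
    thus ?thesis by (simp add: mult_ac)
  qed
  ultimately have h1: "Bc * (N+1) \<le> N * M * (M+1)" by simp
  hence "Bc * (N+1) * K^2 \<le> N * M * (M+1) * K^2" by (rule mult_le_mono1)
  also have "\<dots> = N * (M*K) * ((M+1)*K)" by (simp add: power2_eq_square algebra_simps)
  also have "\<dots> \<le> N * (2*N) * (2*N+K)"
  proof -
    have "(M+1)*K \<le> 2*N+K" using assms(4) by simp
    thus ?thesis using mult_le_mono[OF mult_le_mono2[OF assms(4)]] by blast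
  qed
  also have "\<dots> \<le> N * (2*N) * (3*N)" using assms(6) by simp
  finally have X: "Bc * (N+1) * K^2 \<le> 6 * N * N * N" by simp
  have Y: "N * (Bc * K^2) \<le> Bc * (N+1) * K^2" by (simp add: algebra_simps)
  have "N * (Bc * K^2) \<le> 6 * N * N * N" using le_trans[OF Y X] .
  also have "6 * N * N * N = N * (6 * N * N)" by simp
  finally have "N * (Bc * K^2) \<le> N * (6 * N * N)" .
  hence h2: "Bc * K^2 \<le> 6 * N * N" using assms(6) by (simp only: mult_le_cancel1)
  have "K \<le> K*K" using assms(7) by simp
  hence "Suc (K + K) \<le> K * (K * 3)" using assms(7) by linarith
  hence "(K+1)^2 \<le> 4 * K^2" using assms(7) unfolding power2_eq_square by (simp add: algebra_simps)
  hence "Bc * (K+1)^2 \<le> Bc * (4 * K^2)" by simp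
  also have "\<dots> \<le> 24 * N^2" using h2 by (simp add: power2_eq_square)
  finally show ?thesis .
qed

lemma key:
  fixes A B :: "real set"
  assumes fA: "finite A" and fB: "finite B" and nA: "A \<noteq> {}" and nB: "B \<noteq> {}"
    and d: "distinct_consec_diffs A"
  shows "card B * card A ^ 2 \<le> 24 * card (sumset A B) ^ 2"
proof -
  define S where "S = sumset A B"
  define N where "N = card S"
  define a where "a = sorted_list_of_set A"
  define k where "k = card A"
  have Seq: "S = (\<lambda>(x,y). x+y) ` (A \<times> B)" unfolding S_def sumset_def by auto
  have fS: "finite S" using Seq fA fB by simp
  have len: "length a = k" unfolding a_def k_def by simp
  have setA: "set a = A" unfolding a_def using fA by simp
  have lt: "a!i < a!j" if "i < j" "j < k" for i j
    using sorted_wrt_nth_less[OF strict_sorted_list_of_set, of i j A] that len unfolding a_def by simp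
  have le: "a!i \<le> a!j" if "i \<le> j" "j < k" for i j
    using lt[of i j] that by (cases "i = j") auto
  have aA: "\<And>i. i < k \<Longrightarrow> a!i \<in> A" using setA len nth_mem by blast
  have inS: "\<And>x y. x \<in> A \<Longrightarrow> y \<in> B \<Longrightarrow> x + y \<in> S" unfolding S_def sumset_def by blast
  have dcd: "\<forall>i j. i + 1 < length a \<and> j + 1 < length a \<and> a!(i+1) - a!i = a!(j+1) - a!j \<longrightarrow> i = j"
    using d unfolding distinct_consec_diffs_def Let_def a_def by simp
  have dd: "i = j" if "Suc i < k" "Suc j < k" "a!(Suc i) - a!i = a!(Suc j) - a!j" for i j
    using dcd[rule_format, of i j] that len by simp
  obtain b0 where b0: "b0 \<in> B" using nB by blast
  obtain a0 where a0: "a0 \<in> A" using nA by blast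
  have kN: "k \<le> N"
  proof -
    have "(\<lambda>x. x + b0) ` A \<subseteq> S" using inS b0 by auto
    hence "card ((\<lambda>x. x + b0) ` A) \<le> N" unfolding N_def using fS card_mono by blast
    moreover have "card ((\<lambda>x. x + b0) ` A) = k" unfolding k_def by (rule card_image) (simp add: inj_on_def)
    ultimately show ?thesis by simp
  qed
  have BN: "card B \<le> N"
  proof -
    have "(\<lambda>x. a0 + x) ` B \<subseteq> S" using inS a0 by auto
    hence "card ((\<lambda>x. a0 + x) ` B) \<le> N" unfolding N_def using fS card_mono by blast
    moreover have "card ((\<lambda>x. a0 + x) ` B) = card B" by (rule card_image) (simp add: inj_on_def)
    ultimately show ?thesis by simp
  qed
  have k1: "k \<ge> 1" using fA nA unfolding k_def by (simp add: Suc_le_eq card_gt_0_iff)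
  show ?thesis
  proof (cases "k = 1")
    case True
    then have "card B * card A^2 = card B" using k_def by simp
    also have "\<dots> \<le> N" by (rule BN)
    also have "N \<le> 24*N^2" using kN k1 by (simp add: power2_eq_square)
    finally show ?thesis unfolding N_def S_def .
  next
    case False
    define K where "K = k - 1"
    have K1: "K \<ge> 1" and kK: "k = K + 1" using False k1 unfolding K_def by auto
    have KN: "K < N" using kN kK by simp
    define M where "M = (2*N) div K"
    have M1: "M*K \<le> 2*N" unfolding M_def by (rule div_times_less_eq_dividend)
    have M2: "2*N < (M+1)*K"
    proof -
      have "2*N = M*K + (2*N) mod K" unfolding M_def by simp
      moreover have "(2*N) mod K < K" using K1 by simp
      ultimately show ?thesis by simp
    qed
    define I where "I i b = {x\<in>S. a!i + b < x \<and> x \<le> a!(Suc i) + b}" for i b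
    define f where "f i b = card (I i b)" for i b
    have fI: "finite (I i b)" for i b using fS unfolding I_def by simp
    have ISub: "I i b \<subseteq> S" for i b unfolding I_def by auto
    have sumf: "(\<Sum>i<K. f i b) \<le> N" if bB: "b \<in> B" for b
    proof -
      have disj: "\<forall>i\<in>{..<K}. \<forall>j\<in>{..<K}. i \<noteq> j \<longrightarrow> I i b \<inter> I j b = {}"
      proof (intro ballI impI)
        fix i j assume i: "i \<in> {..<K}" and j: "j \<in> {..<K}" and ij: "i \<noteq> j"
        have A1: "I i b \<inter> I j b = {}" if "i < j" "j < K" for i j
        proof -
          have "a!(Suc i) \<le> a!j" using le[of "Suc i" j] that kK by simp
          thus ?thesis unfolding I_def by auto
        qed
        show "I i b \<inter> I j b = {}"
          using ij i j A1[of i j] A1[of j i] by (cases "i < j") (auto simp: Int_commute)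
      qed
      have "(\<Sum>i<K. f i b) = card (\<Union>i<K. I i b)" unfolding f_def
        using card_UN_disjoint[OF _ _ disj] fI by simp
      also have "\<dots> \<le> N" unfolding N_def by (rule card_mono[OF fS]) (use ISub in auto)
      finally show ?thesis .
    qed
    have cardlt: "\<And>lo h1 h2. h1 < h2 \<Longrightarrow> h2 \<in> S \<Longrightarrow> lo < h2 \<Longrightarrow>
        card {x\<in>S. lo < x \<and> x \<le> h1} < card {x\<in>S. lo < x \<and> x \<le> h2}"
    proof -
      fix lo h1 h2 :: real assume h: "h1 < h2" "h2 \<in> S" "lo < h2"
      define X where "X = {x\<in>S. lo < x \<and> x \<le> h1}"
      define Y where "Y = {x\<in>S. lo < x \<and> x \<le> h2}"
      have "X \<subseteq> Y" unfolding X_def Y_def using h(1) by force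
      moreover have "h2 \<in> Y" unfolding Y_def using h by simp
      moreover have "h2 \<notin> X" unfolding X_def using h(1) by simp
      ultimately have "X \<subset> Y" by blast
      moreover have "finite Y" unfolding Y_def using fS by simp
      ultimately have "card X < card Y" using psubset_card_mono by blast
      thus "card {x\<in>S. lo < x \<and> x \<le> h1} < card {x\<in>S. lo < x \<and> x \<le> h2}"
        unfolding X_def Y_def .
    qed
    define P where "P = {..<K} \<times> B"
    define G where "G = {p\<in>P. f (fst p) (snd p) \<le> M}"
    define Bd where "Bd = {p\<in>P. M < f (fst p) (snd p)}"
    have fP: "finite P" unfolding P_def using fB by simp
    have GBd: "card G + card Bd = K * card B"
    proof -
      have "card G + card Bd = card (G \<union> Bd)"
        by (rule card_Un_disjoint[symmetric]) (use fP in \<open>auto simp: G_def Bd_def\<close>)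
      also have "G \<union> Bd = P" unfolding G_def Bd_def by auto
      finally show ?thesis unfolding P_def by (simp add: card_cartesian_product)
    qed
    have Gle: "card G \<le> N * M"
    proof -
      define g where "g p = (a!(fst p) + snd p, f (fst p) (snd p))" for p
      have inj: "inj_on g G"
      proof (rule inj_onI)
        fix p q assume p: "p \<in> G" and q: "q \<in> G" and gpq: "g p = g q"
        obtain i b where pe: "p = (i,b)" by force
        obtain j b' where qe: "q = (j,b')" by force
        have i: "i < K" "b \<in> B" using p pe unfolding G_def P_def by auto
        have j: "j < K" "b' \<in> B" using q qe unfolding G_def P_def by auto
        have lo: "a!i + b = a!j + b'" and ff: "f i b = f j b'" using gpq pe qe g_def by auto
        have h1S: "a!(Suc i) + b \<in> S" using inS aA i kK by simp
        have h2S: "a!(Suc j) + b' \<in> S" using inS aA j kK by simp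
        have l1: "a!i + b < a!(Suc i) + b" using lt[of i "Suc i"] i kK by simp
        have l2: "a!j + b' < a!(Suc j) + b'" using lt[of j "Suc j"] j kK by simp
        have hi: "a!(Suc i) + b = a!(Suc j) + b'"
        proof (rule ccontr)
          assume ne: "a!(Suc i) + b \<noteq> a!(Suc j) + b'"
          show False
          proof (cases "a!(Suc i) + b < a!(Suc j) + b'")
            case True
            have "f i b < f j b'" unfolding f_def I_def lo
              using cardlt[OF True h2S] l2 by simp
            thus False using ff by simp
          next
            case False
            hence F: "a!(Suc j) + b' < a!(Suc i) + b" using ne by simp
            have "f j b' < f i b" unfolding f_def I_def lo
              using cardlt[OF F h1S] l1 lo by simp
            thus False using ff by simp
          qed
        qed
        have "a!(Suc i) - a!i = a!(Suc j) - a!j" using lo hi by simp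
        hence "i = j" using dd i j kK by simp
        thus "p = q" using pe qe lo by simp
      qed
      have sub: "g ` G \<subseteq> S \<times> {1..M}"
      proof
        fix y assume "y \<in> g ` G"
        then obtain i b where ib: "(i,b) \<in> G" and y: "y = g (i,b)" by auto
        have i: "i < K" "b \<in> B" "f i b \<le> M" using ib unfolding G_def P_def by auto
        have "a!(Suc i) + b \<in> I i b" unfolding I_def using inS aA i kK lt[of i "Suc i"] by simp
        hence "I i b \<noteq> {}" by blast
        hence "f i b \<ge> 1" unfolding f_def using fI[of i b] by (simp add: Suc_le_eq card_gt_0_iff)
        thus "y \<in> S \<times> {1..M}" using y g_def inS aA i kK by simp
      qed
      have "card G = card (g ` G)" using card_image[OF inj] by simp
      also have "\<dots> \<le> card (S \<times> {1..M})" by (rule card_mono[OF _ sub]) (use fS in simp)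
      also have "\<dots> = N * M" unfolding N_def by (simp add: card_cartesian_product)
      finally show ?thesis .
    qed
    have Bdle: "card Bd * (M+1) \<le> card B * N"
    proof -
      have "card Bd * (M+1) = (\<Sum>p\<in>Bd. M+1)" by simp
      also have "\<dots> \<le> (\<Sum>p\<in>Bd. f (fst p) (snd p))" by (rule sum_mono) (auto simp: Bd_def)
      also have "\<dots> \<le> (\<Sum>p\<in>P. f (fst p) (snd p))" by (rule sum_mono2) (auto simp: fP Bd_def)
      also have "\<dots> = (\<Sum>i<K. \<Sum>b\<in>B. f i b)" unfolding P_def sum.cartesian_product' by simp
      also have "\<dots> = (\<Sum>b\<in>B. \<Sum>i<K. f i b)" by (rule sum.swap)
      also have "\<dots> \<le> (\<Sum>b\<in>B. N)" by (rule sum_mono) (rule sumf)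
      also have "\<dots> = card B * N" by simp
      finally show ?thesis .
    qed
    have "card B * (K+1)^2 \<le> 24 * N^2" by (rule arith_final[OF Gle Bdle GBd M1 M2 KN K1])
    thus ?thesis using kK k_def N_def S_def by simp
  qed
qed

theorem theorem1:
  shows "\<exists>c::real. c > 0 \<and>
    (\<forall>A B :: real set. finite A \<and> finite B \<and> A \<noteq> {} \<and> B \<noteq> {} \<and>
        distinct_consec_diffs A \<longrightarrow>
        real (card (sumset A B)) \<ge> c * real (card A) * sqrt (real (card B)))"
proof (intro exI[of _ "1/5"] conjI allI impI)
  show "(0::real) < 1/5" by simp
  fix A B :: "real set"
  assume h: "finite A \<and> finite B \<and> A \<noteq> {} \<and> B \<noteq> {} \<and> distinct_consec_diffs A"
  define N where "N = real (card (sumset A B))"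
  define k where "k = real (card A)"
  define b where "b = real (card B)"
  have "card B * card A ^ 2 \<le> 24 * card (sumset A B) ^ 2" using key h by blast
  hence "real (card B * card A ^ 2) \<le> real (24 * card (sumset A B) ^ 2)" by (simp only: of_nat_le_iff)
  hence kb: "b * k^2 \<le> 24 * N^2" unfolding N_def k_def b_def by simp
  have b0: "b \<ge> 0" and k0: "k \<ge> 0" and N0: "N \<ge> 0" unfolding b_def k_def N_def by auto
  have sb: "(sqrt b)^2 = b" using b0 by simp
  have "(1/5 * k * sqrt b)^2 = k^2 * (sqrt b)^2 / 25" by (simp add: power_mult_distrib power_divide)
  also have "\<dots> = k^2 * b / 25" by (simp only: sb)
  also have "\<dots> \<le> N^2"
  proof -
    have "k^2 * b = b * k^2" by simp
    moreover have "0 \<le> N^2" by simp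
    ultimately show ?thesis using kb by linarith
  qed
  finally have "(1/5 * k * sqrt b)^2 \<le> N^2" .
  hence "1/5 * k * sqrt b \<le> N" using N0 by (rule power2_le_imp_le)
  thus "1/5 * real (card A) * sqrt (real (card B)) \<le> real (card (sumset A B))"
    unfolding N_def k_def b_def .
qed

end
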